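(* Let $N\ge2$, $1^*=N/(N-1)$, $\epsilon>0$, let $f$ satisfy $(f_1)$–$(f_5)$ and $V$ satisfy $(V_1)$–$(V_2)$ (as in the context). Let $(v_n)\subset BV(\mathbb{R}^N)$ and $\tau_n\to0$ be such that $\lim_{n\to\infty}\Phi_\epsilon(v_n)=c_\epsilon$ and $$\|w\|_\epsilon-\|v_n\|_\epsilon\ge\int_{\mathbb{R}^N}f(v_n)(w-v_n)\,dx-\tau_n\|w-v_n\|_\epsilon\quad\forall w\in BV(\mathbb{R}^N).$$ Then $(v_n)$ is bounded in $BV(\mathbb{R}^N)$.
   Context: Assumptions: $(f_1)$ $f\in C^1(\mathbb{R})$; $(f_2)$ $f(s)=o(1)$ as $s\to0$; $(f_3)$ $|f(s)|\le c_1+c_2|s|^{p-1}$ for some $c_1,c_2>0$, $p\in[1,1^* )$; $(f_4)$ there is $\theta>1$ with $0<\theta F(s)\le f(s)s$ for $s\ne0$, $F(s)=\int_0^sf$; $(f_5)$ $f$ is increasing; $(V_1)$ $V\in L^\infty(\mathbb{R}^N)$, $V_0:=\inf V>0$; $(V_2)$ $\liminf_{|x|\to\infty}V(x)>V_0$. Notation: $\|v\|_\epsilon=\int_{\mathbb{R}^N}|Dv|+\int_{\mathbb{R}^N}V(\epsilon x)|v|\,dx$ (a norm on $BV(\mathbb{R}^N)$ equivalent to the usual one), $\Phi_\epsilon(v)=\|v\|_\epsilon-\int_{\mathbb{R}^N}F(v)\,dx$, and $c_\epsilon=\inf_{\gamma\in\Gamma_\epsilon}\sup_{t\in[0,1]}\Phi_\epsilon(\gamma(t))$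 with $\Gamma_\epsilon=\{\gamma\in C([0,1],BV(\mathbb{R}^N)):\gamma(0)=0,\ \Phi_\epsilon(\gamma(1))<0\}$. *)

theory Defs
  imports "HOL-Analysis.Analysis"
begin

definition divergence :: "(real^'n \<Rightarrow> real^'n) \<Rightarrow> real^'n \<Rightarrow> real" where
  "divergence \<phi> x = (\<Sum>i\<in>UNIV. (frechet_derivative \<phi> (at x) (axis i 1)) $ i)"

definition test_fields :: "(real^'n \<Rightarrow> real^'n) set" where
  "test_fields = {\<phi>. (\<forall>x. \<phi> differentiable (at x))
      \<and> (\<forall>i j. continuous_on UNIV (\<lambda>x. (frechet_derivative \<phi> (at x) (axis j 1)) $ i))
      \<and> bounded {x. \<phi> x \<noteq> 0}
      \<and> (\<forall>x. norm (\<phi> x) \<le> 1)}"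

definition total_variation :: "(real^'n \<Rightarrow> real) \<Rightarrow> ereal" where
  "total_variation u = (SUP \<phi>\<in>test_fields. ereal (LINT x|lebesgue. u x * divergence \<phi> x))"

definition BV :: "(real^'n \<Rightarrow> real) set" where
  "BV = {u. integrable lebesgue u \<and> total_variation u < \<infinity>}"

definition bv_norm :: "(real^'n \<Rightarrow> real) \<Rightarrow> real" where
  "bv_norm u = real_of_ereal (total_variation u) + (LINT x|lebesgue. \<bar>u x\<bar>)"

definition eps_norm :: "(real^'n \<Rightarrow> real) \<Rightarrow> real \<Rightarrow> (real^'n \<Rightarrow> real) \<Rightarrow> real" where
  "eps_norm V \<epsilon> v = real_of_ereal (total_variation v) + (LINT x|lebesgue. V (\<epsilon> *\<^sub>R x) * \<bar>v x\<bar>)"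

definition prim :: "(real \<Rightarrow> real) \<Rightarrow> real \<Rightarrow> real" where
  "prim f s = (LBINT t=0..s. f t)"

definition Phi :: "(real \<Rightarrow> real) \<Rightarrow> (real^'n \<Rightarrow> real) \<Rightarrow> real \<Rightarrow> (real^'n \<Rightarrow> real) \<Rightarrow> real" where
  "Phi f V \<epsilon> v = eps_norm V \<epsilon> v - (LINT x|lebesgue. prim f (v x))"

definition Gamma :: "(real \<Rightarrow> real) \<Rightarrow> (real^'n \<Rightarrow> real) \<Rightarrow> real \<Rightarrow> (real \<Rightarrow> (real^'n \<Rightarrow> real)) set" where
  "Gamma f V \<epsilon> = {\<gamma>. (\<forall>t\<in>{0..1}. \<gamma> t \<in> BV)
      \<and> (\<forall>t\<in>{0..1}. \<forall>e>0. \<exists>d>0. \<forall>s\<in>{0..1}. \<bar>s - t\<bar> < d \<longrightarrow> eps_norm V \<epsilon> (\<lambda>x. \<gamma> s x - \<gamma> t x) < e)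
      \<and> \<gamma> 0 = (\<lambda>x. 0) \<and> Phi f V \<epsilon> (\<gamma> 1) < 0}"

definition mp_level :: "(real \<Rightarrow> real) \<Rightarrow> (real^'n \<Rightarrow> real) \<Rightarrow> real \<Rightarrow> real" where
  "mp_level f V \<epsilon> = Inf {(SUP t\<in>{0..1}. Phi f V \<epsilon> (\<gamma> t)) | \<gamma>. \<gamma> \<in> Gamma f V \<epsilon>}"

end

theory Submission
  imports Defs
begin


lemma zero_test: "(\<lambda>x. 0) \<in> test_fields"
  by (simp add: test_fields_def)

lemma TV_nonneg: "total_variation (u::real^'n \<Rightarrow> real) \<ge> 0"
proof -
  have "divergence (\<lambda>x::real^'n. 0::real^'n) = (\<lambda>x. 0)"
    by (simp add: divergence_def fun_eq_iff)
  then have "ereal (LINT x|lebesgue. u x * divergence (\<lambda>x::real^'n. 0::real^'n) x) = 0" by simp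
  then show ?thesis unfolding total_variation_def
    by (intro order_trans[OF _ SUP_upper[OF zero_test]]) simp
qed

lemma TV_zero: "total_variation (\<lambda>x::real^'n. 0) = 0"
  unfolding total_variation_def by (simp, subst SUP_const) (use zero_test in auto)

lemma neg_test: assumes "\<phi> \<in> test_fields" shows "(\<lambda>x. - \<phi> x) \<in> test_fields"
  and "divergence (\<lambda>x. - \<phi> x) x = - divergence \<phi> x"
proof -
  have d: "\<And>x. \<phi> differentiable (at x)" using assms by (simp add: test_fields_def)
  have fd: "frechet_derivative (\<lambda>x. - \<phi> x) (at x) = (\<lambda>h. - frechet_derivative \<phi> (at x) h)" for x
    by (rule frechet_derivative_at[symmetric], rule has_derivative_minus,
        rule frechet_derivative_works[THEN iffD1, OF d])
  show "divergence (\<lambda>x. - \<phi> x) x = - divergence \<phi> x"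
    by (simp add: divergence_def fd sum_negf)
  have c: "\<And>i j. continuous_on UNIV (\<lambda>x. (frechet_derivative \<phi> (at x) (axis j 1)) $ i)"
    using assms by (simp add: test_fields_def)
  have b: "bounded {x. \<phi> x \<noteq> 0}" "\<And>x. norm (\<phi> x) \<le> 1" using assms by (auto simp: test_fields_def)
  have c2: "continuous_on UNIV (\<lambda>x. (frechet_derivative (\<lambda>x. - \<phi> x) (at x) (axis j 1)) $ i)" for i j
    unfolding fd using continuous_on_minus[OF c[of j i]] by simp
  have d2: "(\<lambda>x. - \<phi> x) differentiable (at x)" for x
    using differentiable_minus[OF d] by simp
  show "(\<lambda>x. - \<phi> x) \<in> test_fields"
  proof -
    have "{x. - \<phi> x \<noteq> 0} = {x. \<phi> x \<noteq> 0}" by auto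
    then have "bounded {x. - \<phi> x \<noteq> 0}" using b(1) by simp
    moreover have "\<forall>x. norm (- \<phi> x) \<le> 1" using b(2) by (metis norm_minus_cancel)
    ultimately show ?thesis unfolding test_fields_def mem_Collect_eq
      using c2 d2 by blast
  qed
qed

lemma TV_neg: "total_variation (\<lambda>x. - u x) = total_variation u"
  unfolding total_variation_def
proof (rule SUP_eq)
  fix \<phi> :: "real^'a \<Rightarrow> real^'a" assume h: "\<phi> \<in> test_fields"
  show "\<exists>j\<in>test_fields. ereal (LINT x|lebesgue. - u x * divergence \<phi> x) \<le> ereal (LINT x|lebesgue. u x * divergence j x)"
    by (rule bexI[of _ "\<lambda>x. - \<phi> x"]) (auto simp: neg_test[OF h])
  show "\<exists>j\<in>test_fields. ereal (LINT x|lebesgue. u x * divergence \<phi> x) \<le> ereal (LINT x|lebesgue. - u x * divergence j x)"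
    by (rule bexI[of _ "\<lambda>x. - \<phi> x"]) (auto simp: neg_test[OF h])
qed

lemma TV_two: "total_variation (\<lambda>x. 2 * u x) \<le> 2 * total_variation u"
  unfolding total_variation_def
proof (rule SUP_least)
  fix \<phi> :: "real^'a \<Rightarrow> real^'a" assume h: "\<phi> \<in> test_fields"
  have "ereal (LINT x|lebesgue. u x * divergence \<phi> x) \<le> (SUP \<phi>\<in>test_fields. ereal (LINT x|lebesgue. u x * divergence \<phi> x))"
    using h by (rule SUP_upper)
  then have "2 * ereal (LINT x|lebesgue. u x * divergence \<phi> x) \<le> 2 * (SUP \<phi>\<in>test_fields. ereal (LINT x|lebesgue. u x * divergence \<phi> x))"
    by (rule ereal_mult_left_mono) auto
  moreover have "(LINT x|lebesgue. 2 * u x * divergence \<phi> x) = 2 * (LINT x|lebesgue. u x * divergence \<phi> x)"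
    by (simp add: mult.assoc)
  ultimately show "ereal (LINT x|lebesgue. 2 * u x * divergence \<phi> x) \<le> 2 * (SUP \<phi>\<in>test_fields. ereal (LINT x|lebesgue. u x * divergence \<phi> x))"
    by simp
qed



lemma AE_scale:
  fixes P :: "'a::euclidean_space \<Rightarrow> bool"
  assumes "AE x in lebesgue. P x" "c \<noteq> 0"
  shows "AE x in lebesgue. P (c *\<^sub>R x)"
proof -
  from AE_E[OF assms(1)] obtain N where N0: "{x \<in> space lebesgue. \<not> P x} \<subseteq> N"
    "emeasure lebesgue N = 0" "N \<in> sets lebesgue" .
  then have N: "{x \<in> space lebesgue. \<not> P x} \<subseteq> N" "N \<in> null_sets lebesgue" by auto
  define S where "S = (\<lambda>x::'a. c *\<^sub>R x) -` N"
  have Ssets: "S \<in> sets lebesgue"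
    using measurable_sets[OF lebesgue_measurable_scaling[of c], of N] N(2)
    by (simp add: S_def null_setsD2)
  have "S = (\<lambda>x. (1/c) *\<^sub>R x + 0) ` N"
    using assms(2) unfolding S_def by (auto simp: image_iff intro!: bexI[of _ "c *\<^sub>R _"])
  then have "emeasure lebesgue S = \<bar>1/c\<bar> ^ DIM('a) * emeasure lebesgue N"
    using emeasure_lebesgue_affine[of "1/c" 0 N] by simp
  also have "\<dots> = 0" using N0(2) by simp
  finally have "S \<in> null_sets lebesgue" using Ssets by (simp add: null_sets_def)
  moreover have "{x \<in> space lebesgue. \<not> P (c *\<^sub>R x)} \<subseteq> S"
    using N(1) unfolding S_def by auto
  ultimately show ?thesis by (rule AE_I')
qed

lemma eps_norm_neg: "eps_norm V e (\<lambda>x. - u x) = eps_norm V e u"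
  by (simp add: eps_norm_def TV_neg)

lemma eps_norm_zero: "eps_norm V e (\<lambda>x. 0) = 0"
  by (simp add: eps_norm_def TV_zero)

lemma TV_fin: "u \<in> BV \<Longrightarrow> \<exists>r. total_variation u = ereal r \<and> r \<ge> 0"
  using TV_nonneg[of u] unfolding BV_def
  by (cases "total_variation u") auto

lemma two_BV: assumes "u \<in> BV" shows "(\<lambda>x. 2 * u x) \<in> BV"
  and "real_of_ereal (total_variation (\<lambda>x. 2 * u x)) \<le> 2 * real_of_ereal (total_variation u)"
proof -
  obtain r where r: "total_variation u = ereal r" "r \<ge> 0" using TV_fin[OF assms] by blast
  have le: "total_variation (\<lambda>x. 2 * u x) \<le> ereal (2 * r)" using TV_two[of u] r by simp
  have ge: "total_variation (\<lambda>x. 2 * u x) \<ge> 0" by (rule TV_nonneg)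
  then obtain s where s: "total_variation (\<lambda>x. 2 * u x) = ereal s" "s \<le> 2 * r" using le
    by (cases "total_variation (\<lambda>x. 2 * u x)") auto
  show "(\<lambda>x. 2 * u x) \<in> BV" using assms s unfolding BV_def by auto
  show "real_of_ereal (total_variation (\<lambda>x. 2 * u x)) \<le> 2 * real_of_ereal (total_variation u)"
    using s r by simp
qed

lemma eps_norm_two: assumes "u \<in> BV"
  shows "eps_norm V e (\<lambda>x. 2 * u x) \<le> 2 * eps_norm V e u"
proof -
  have "(LINT x|lebesgue. V (e *\<^sub>R x) * \<bar>2 * u x\<bar>) = (LINT x|lebesgue. 2 * (V (e *\<^sub>R x) * \<bar>u x\<bar>))"
    by (simp add: abs_mult mult.left_commute)
  also have "\<dots> = 2 * (LINT x|lebesgue. V (e *\<^sub>R x) * \<bar>u x\<bar>)" by simp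
  finally show ?thesis using two_BV(2)[OF assms] unfolding eps_norm_def by simp
qed


theorem lemma3p3:
  fixes f :: "real \<Rightarrow> real" and V :: "real^'n \<Rightarrow> real" and \<epsilon> :: real
    and v :: "nat \<Rightarrow> real^'n \<Rightarrow> real" and \<tau> :: "nat \<Rightarrow> real"
  assumes N2: "CARD('n) \<ge> 2"
    and eps: "\<epsilon> > 0"
    and f1: "\<forall>s. f differentiable (at s)" "continuous_on UNIV (deriv f)"
    and f2: "(f \<longlongrightarrow> 0) (at 0)"
    and f3: "\<exists>c1 c2 p. c1 > 0 \<and> c2 > 0 \<and> 1 \<le> p \<and> p < real CARD('n) / (real CARD('n) - 1)
               \<and> (\<forall>s. \<bar>f s\<bar> \<le> c1 + c2 * \<bar>s\<bar> powr (p - 1))"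
    and f4: "\<exists>\<theta>>1. \<forall>s. s \<noteq> 0 \<longrightarrow> 0 < \<theta> * prim f s \<and> \<theta> * prim f s \<le> f s * s"
    and f5: "mono f"
    and V1: "V \<in> borel_measurable lebesgue" "\<exists>M. AE x in lebesgue. \<bar>V x\<bar> \<le> M"
            "bdd_below (range V)" "Inf (range V) > 0"
    and V2: "Liminf at_infinity (\<lambda>x. ereal (V x)) > ereal (Inf (range V))"
    and vBV: "\<forall>n. v n \<in> BV"
    and tau: "\<tau> \<longlonglongrightarrow> 0"
    and lev: "(\<lambda>n. Phi f V \<epsilon> (v n)) \<longlonglongrightarrow> mp_level f V \<epsilon>"
    and PS: "\<forall>n. \<forall>w\<in>BV. eps_norm V \<epsilon> w - eps_norm V \<epsilon> (v n)
               \<ge> (LINT x|lebesgue. f (v n x) * (w x - v n x)) - \<tau> n * eps_norm V \<epsilon> (\<lambda>x. w x - v n x)"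
  shows "\<exists>M. \<forall>n. bv_norm (v n) \<le> M"
proof -
  define V0 where "V0 = Inf (range V)"
  have V0pos: "V0 > 0" using V1(4) by (simp add: V0_def)
  have Vge: "V y \<ge> V0" for y unfolding V0_def by (rule cInf_lower[OF rangeI V1(3)])
  obtain \<theta> where th: "\<theta> > 1" "\<And>s. s \<noteq> 0 \<Longrightarrow> 0 < \<theta> * prim f s \<and> \<theta> * prim f s \<le> f s * s"
    using f4 by blast
  have prim0: "prim f 0 = 0" unfolding prim_def zero_ereal_def by (rule interval_integral_endpoints_same)
  have Fge: "prim f s \<ge> 0" for s
  proof (cases "s = 0")
    case False then have "0 < \<theta> * prim f s" using th(2) by blast
    then show ?thesis using th(1) by (simp add: zero_less_mult_iff)
  qed (simp add: prim0)
  have Fle: "\<theta> * prim f s \<le> f s * s" for s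
    using th prim0 by (cases "s = 0") auto
  have fs: "f s * s \<ge> 0" for s using Fle[of s] Fge[of s] th(1)
    by (smt (verit) mult_nonneg_nonneg)
  have enn: "eps_norm V \<epsilon> u \<ge> 0" for u
  proof -
    have "real_of_ereal (total_variation u) \<ge> 0" by (simp add: TV_nonneg real_of_ereal_pos)
    moreover have "(LINT x|lebesgue. V (\<epsilon> *\<^sub>R x) * \<bar>u x\<bar>) \<ge> 0"
      by (rule integral_nonneg_AE) (auto intro!: always_eventually mult_nonneg_nonneg
          simp: order_trans[OF less_imp_le[OF V0pos] Vge])
    ultimately show ?thesis unfolding eps_norm_def by simp
  qed
  obtain MV where MV: "AE x in lebesgue. \<bar>V x\<bar> \<le> MV" using V1(2) by blast
  have MVe: "AE x in lebesgue. \<bar>V (\<epsilon> *\<^sub>R x)\<bar> \<le> MV" using AE_scale[OF MV] eps by simp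
  have Vmeas: "(\<lambda>x. V (\<epsilon> *\<^sub>R x)) \<in> borel_measurable lebesgue"
    using measurable_compose[OF lebesgue_measurable_scaling V1(1)] by (simp add: comp_def)
  define m where "m = min 1 V0"
  have mpos: "m > 0" using V0pos by (simp add: m_def)
  have bvle: "bv_norm (v n) \<le> eps_norm V \<epsilon> (v n) / m" for n
  proof -
    have int: "integrable lebesgue (v n)" using vBV by (simp add: BV_def)
    have int2: "integrable lebesgue (\<lambda>x. V (\<epsilon> *\<^sub>R x) * \<bar>v n x\<bar>)"
    proof (rule Bochner_Integration.integrable_bound[of _ "\<lambda>x. MV * \<bar>v n x\<bar>"])
      show "integrable lebesgue (\<lambda>x. MV * \<bar>v n x\<bar>)" using int by auto
      show "(\<lambda>x. V (\<epsilon> *\<^sub>R x) * \<bar>v n x\<bar>) \<in> borel_measurable lebesgue"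
        using Vmeas int by measurable
      show "AE x in lebesgue. norm (V (\<epsilon> *\<^sub>R x) * \<bar>v n x\<bar>) \<le> norm (MV * \<bar>v n x\<bar>)"
        using MVe by eventually_elim (auto simp: abs_mult intro: mult_right_mono)
    qed
    have "(LINT x|lebesgue. V0 * \<bar>v n x\<bar>) \<le> (LINT x|lebesgue. V (\<epsilon> *\<^sub>R x) * \<bar>v n x\<bar>)"
      using int int2 Vge by (intro integral_mono) (auto intro: mult_right_mono)
    then have i1: "V0 * (LINT x|lebesgue. \<bar>v n x\<bar>) \<le> (LINT x|lebesgue. V (\<epsilon> *\<^sub>R x) * \<bar>v n x\<bar>)" by simp
    have t0: "real_of_ereal (total_variation (v n)) \<ge> 0" by (simp add: TV_nonneg real_of_ereal_pos)
    have a0: "(LINT x|lebesgue. \<bar>v n x\<bar>) \<ge> 0" by simp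
    have m1: "m \<le> 1" "m \<le> V0" by (auto simp: m_def)
    have "m * real_of_ereal (total_variation (v n)) \<le> real_of_ereal (total_variation (v n))"
      using m1(1) t0 mpos by (intro mult_left_le_one_le) auto
    moreover have "m * (LINT x|lebesgue. \<bar>v n x\<bar>) \<le> V0 * (LINT x|lebesgue. \<bar>v n x\<bar>)"
      using m1(2) a0 by (rule mult_right_mono)
    ultimately have "m * bv_norm (v n) \<le> eps_norm V \<epsilon> (v n)"
      unfolding bv_norm_def eps_norm_def using i1 by (simp add: distrib_left)
    then show ?thesis using mpos by (simp add: field_simps)
  qed
  obtain B where B0: "\<forall>n. \<bar>Phi f V \<epsilon> (v n)\<bar> \<le> B"
    using convergent_imp_Bseq[OF convergentI[OF lev]] unfolding Bseq_def by auto
  have B: "\<And>n. Phi f V \<epsilon> (v n) \<le> B" using B0 abs_le_D1 by blast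
  define \<delta> where "\<delta> = min (1/2) ((\<theta> - 1) / 2)"
  have dpos: "\<delta> > 0" using th by (simp add: \<delta>_def)
  define \<kappa> where "\<kappa> = 1 - (1 + \<delta>) / \<theta>"
  have "\<delta> \<le> (\<theta> - 1) / 2" unfolding \<delta>_def by (rule min.cobounded2)
  then have "1 + \<delta> < \<theta>" using th(1) by (simp add: field_simps)
  then have kpos: "\<kappa> > 0" using th(1) unfolding \<kappa>_def by (simp add: field_simps)
  obtain N where N: "\<And>n. n \<ge> N \<Longrightarrow> \<bar>\<tau> n\<bar> < \<delta>"
    using LIMSEQ_D[OF tau dpos] by (metis real_norm_def diff_zero)
  have bnd: "eps_norm V \<epsilon> (v n) \<le> max 0 (B / \<kappa>)" if "n \<ge> N" for n
  proof -
    have tn: "\<bar>\<tau> n\<bar> < \<delta>" using N that .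
    let ?g = "\<lambda>x. f (v n x) * v n x"
    let ?e = "eps_norm V \<epsilon> (v n)"
    show ?thesis
    proof (cases "integrable lebesgue ?g")
      case True
      have PS2: "eps_norm V \<epsilon> (\<lambda>x. 2 * v n x) - ?e \<ge> (LINT x|lebesgue. f (v n x) * (2 * v n x - v n x)) - \<tau> n * eps_norm V \<epsilon> (\<lambda>x. 2 * v n x - v n x)"
        using PS[rule_format, of "\<lambda>x. 2 * v n x" n] two_BV(1)[of "v n"] vBV by simp
      have eq1: "(\<lambda>x. 2 * v n x - v n x) = v n" by (simp add: fun_eq_iff)
      have eq2: "(LINT x|lebesgue. f (v n x) * (2 * v n x - v n x)) = (LINT x|lebesgue. ?g x)" by simp
      have e2: "eps_norm V \<epsilon> (\<lambda>x. 2 * v n x) \<le> 2 * ?e" using eps_norm_two[of "v n" V \<epsilon>] vBV by simp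
      have "(LINT x|lebesgue. ?g x) \<le> (1 + \<tau> n) * ?e"
        using PS2 e2 unfolding eq1 eq2 by (simp add: algebra_simps)
      also have "\<dots> \<le> (1 + \<delta>) * ?e" using tn enn[of "v n"] by (intro mult_right_mono) auto
      finally have gle: "(LINT x|lebesgue. ?g x) \<le> (1 + \<delta>) * ?e" .
      have Fle2: "(LINT x|lebesgue. prim f (v n x)) \<le> (LINT x|lebesgue. ?g x) / \<theta>"
      proof (cases "integrable lebesgue (\<lambda>x. prim f (v n x))")
        case True
        have "(LINT x|lebesgue. prim f (v n x)) \<le> (LINT x|lebesgue. ?g x / \<theta>)"
          using True \<open>integrable lebesgue ?g\<close> Fle th(1)
          by (intro integral_mono) (auto simp: field_simps mult.commute)
        then show ?thesis by simp
      next
        case False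
        then show ?thesis using th(1) fs by (simp add: not_integrable_integral_eq)
      qed
      have "\<kappa> * ?e = ?e - (1 + \<delta>) * ?e / \<theta>" unfolding \<kappa>_def by (simp add: algebra_simps)
      also have "\<dots> \<le> ?e - (LINT x|lebesgue. prim f (v n x))"
        using Fle2 gle th(1) by (smt (verit) divide_right_mono)
      also have "\<dots> = Phi f V \<epsilon> (v n)" by (simp add: Phi_def)
      also have "\<dots> \<le> B" by (rule B)
      finally have "?e \<le> B / \<kappa>" using kpos by (simp add: field_simps)
      then show ?thesis by simp
    next
      case False
      have z: "(\<lambda>x::real^'n. 0::real) \<in> BV" by (simp add: BV_def TV_zero)
      have PS0: "eps_norm V \<epsilon> (\<lambda>x. 0) - ?e \<ge> (LINT x|lebesgue. f (v n x) * (0 - v n x)) - \<tau> n * eps_norm V \<epsilon> (\<lambda>x. 0 - v n x)"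
        using PS[rule_format, of "\<lambda>x. 0" n] z by simp
      have "(LINT x|lebesgue. f (v n x) * (0 - v n x)) = - (LINT x|lebesgue. ?g x)" by simp
      also have "\<dots> = 0" using False by (simp add: not_integrable_integral_eq)
      finally have "(1 - \<tau> n) * ?e \<le> 0"
        using PS0 eps_norm_neg[of V \<epsilon> "v n"] eps_norm_zero[of V \<epsilon>] by (simp add: algebra_simps)
      moreover have "\<delta> \<le> 1/2" unfolding \<delta>_def by (rule min.cobounded1)
      then have "1 - \<tau> n > 0" using tn by (simp add: abs_less_iff)
      ultimately have "?e \<le> 0" by (simp add: mult_le_0_iff)
      then show ?thesis by simp
    qed
  qed
  define M where "M = max (max 0 (B / \<kappa>) / m) (Max ((\<lambda>n. bv_norm (v n)) ` {..<N}) )"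
  show ?thesis
  proof (intro exI allI)
    fix n
    show "bv_norm (v n) \<le> M"
    proof (cases "n < N")
      case True
      then show ?thesis unfolding M_def by (simp add: max.coboundedI2)
    next
      case False
      then have "bv_norm (v n) \<le> max 0 (B / \<kappa>) / m"
      proof -
        have "eps_norm V \<epsilon> (v n) \<le> max 0 (B / \<kappa>)" using bnd[of n] False by simp
        then have "eps_norm V \<epsilon> (v n) / m \<le> max 0 (B / \<kappa>) / m"
          using mpos by (intro divide_right_mono) auto
        then show ?thesis using bvle[of n] by linarith
      qed
      then show ?thesis unfolding M_def by simp
    qed
  qed
qed

end
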